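(* With notation as in the context (type $E_7$), $\Gamma_7^+$ is exactly the set of $abc\in V$ such that exactly one of $a=0$, $b=0$, $c=0$ holds.
   Context: Let $F=\{0,1,2,3\}$ be the group $\mathbb{Z}/2\times\mathbb{Z}/2$ with operation $\oplus$ (binary addition without carry) and symplectic form $(a|a')=0$ if $a=0$, $a'=0$ or $a=a'$, and $1$ otherwise. Let $V=F^3$ (elements written $abc$), with coordinatewise $\oplus$ and form $(abc|a'b'c')=(a|a')+(b|b')+(c|c')\in\mathbb{Z}/2$. Let $\Delta$ be the $E_7$ root system with simple roots $\alpha_1,\dots,\alpha_7$, $\langle\alpha_i,\alpha_i\rangle=2$, $\langle\alpha_i,\alpha_j\rangle=-1$ for $\{i,j\}\in\{\{1,3\},\{3,4\},\{4,5\},\{5,6\},\{6,7\},\{2,4\}\}$, $0$ otherwise; $\Lambda=\bigoplus\mathbb{Z}\alpha_i$, $\Delta^+$ the positive roots. Let $f:\Lambda\to V$ be the homomorphism with $f(\alpha_1)=100$, $f(\alpha_2)=030$, $f(\alpha_3)=300$, $f(\alpha_4)=111$, $f(\alpha_5)=003$, $f(\alpha_6)=001$, $f(\alpha_7)=033$. Let $\Delta_7^+$ be the set of positive roots $\beta=\sum\beta^i\alpha_i$ with $\beta^7\neq0$, and $\Gamma_7^+=f(\Delta_7^+)$. *)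

theory Defs
  imports Main
begin

text \<open>The group F = Z/2 x Z/2 is modelled as the naturals {0,1,2,3} with
  bitwise exclusive or (binary addition without carry).\<close>

type_synonym vecV = "nat \<times> nat \<times> nat"

definition Fset :: "nat set" where "Fset = {0,1,2,3}"

definition Vset :: "vecV set" where "Vset = Fset \<times> Fset \<times> Fset"

definition vadd :: "vecV \<Rightarrow> vecV \<Rightarrow> vecV" where
  "vadd x y = (xor (fst x) (fst y), xor (fst (snd x)) (fst (snd y)), xor (snd (snd x)) (snd (snd y)))"

text \<open>Integer multiples in V (an elementary abelian 2-group): n.x = x if n odd, 0 otherwise.\<close>
definition vscale :: "int \<Rightarrow> vecV \<Rightarrow> vecV" where
  "vscale n x = (if odd n then x else (0,0,0))"

text \<open>Elements of the root lattice Lambda: coefficient functions beta with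
  beta = sum_{i=1..7} beta i * alpha_i; coefficients outside {1..7} are zero.\<close>
definition lattice :: "(nat \<Rightarrow> int) set" where
  "lattice = {\<beta>. \<forall>i. i \<notin> {1..7} \<longrightarrow> \<beta> i = 0}"

definition E7edge :: "nat \<Rightarrow> nat \<Rightarrow> bool" where
  "E7edge i j = ({i,j} \<in> {{1,3},{3,4},{4,5},{5,6},{6,7},{2,4}})"

definition gram :: "nat \<Rightarrow> nat \<Rightarrow> int" where
  "gram i j = (if i = j then 2 else if E7edge i j then -1 else 0)"

definition form :: "(nat \<Rightarrow> int) \<Rightarrow> (nat \<Rightarrow> int) \<Rightarrow> int" where
  "form \<beta> \<gamma> = (\<Sum>i\<in>{1..7}. \<Sum>j\<in>{1..7}. \<beta> i * \<gamma> j * gram i j)"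

text \<open>The E7 root system: the vectors of squared length 2 in the root lattice
  (E7 is simply laced); positive roots: those with all coefficients nonnegative.\<close>
definition E7roots :: "(nat \<Rightarrow> int) set" where
  "E7roots = {\<beta> \<in> lattice. form \<beta> \<beta> = 2}"

definition E7pos :: "(nat \<Rightarrow> int) set" where
  "E7pos = {\<beta> \<in> E7roots. \<forall>i. \<beta> i \<ge> 0}"

definition Delta7pos :: "(nat \<Rightarrow> int) set" where
  "Delta7pos = {\<beta> \<in> E7pos. \<beta> 7 \<noteq> 0}"

definition fsimple :: "nat \<Rightarrow> vecV" where
  "fsimple i = (if i = 1 then (1,0,0) else if i = 2 then (0,3,0)
     else if i = 3 then (3,0,0) else if i = 4 then (1,1,1)
     else if i = 5 then (0,0,3) else if i = 6 then (0,0,1)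
     else if i = 7 then (0,3,3) else (0,0,0))"

definition fhom :: "(nat \<Rightarrow> int) \<Rightarrow> vecV" where
  "fhom \<beta> = foldr (\<lambda>i acc. vadd (vscale (\<beta> i) (fsimple i)) acc) [1..<8] (0,0,0)"

definition Gamma7pos :: "vecV set" where
  "Gamma7pos = fhom ` Delta7pos"

end

theory Submission imports Defs begin
definition Q :: "int \<Rightarrow> int \<Rightarrow> int \<Rightarrow> int \<Rightarrow> int \<Rightarrow> int \<Rightarrow> int \<Rightarrow> int" where
  "Q x1 x2 x3 x4 x5 x6 x7 = 2*x1^2 + 2*x2^2 + 2*x3^2 + 2*x4^2 + 2*x5^2 + 2*x6^2 + 2*x7^2 - 2*x1*x3 - 2*x3*x4 - 2*x4*x5 - 2*x5*x6 - 2*x6*x7 - 2*x2*x4"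
lemma bnd1:
  assumes "Q x1 x2 x3 x4 x5 x6 x7 = 2" "0 \<le> x1"
  shows "x1 \<le> 2"
proof -
  have id: "4 * Q x1 x2 x3 x4 x5 x6 x7 = 2*(2*x2 + -1*x4)^2 + 2*(2*x3 + -1*x4 + -1*x1)^2 + 1*(2*x4 + -2*x5 + -1*x1)^2 + 1*(2*x5 + -2*x6 + -1*x1)^2 + 1*(2*x6 + -2*x7 + -1*x1)^2 + 1*(2*x7 + -1*x1)^2 + 2*(x1)^2"
    unfolding Q_def by (simp add: power2_eq_square algebra_simps)
  have s0: "0 \<le> 2*(2*x2 + -1*x4)^2" by simp
  have s1: "0 \<le> 2*(2*x3 + -1*x4 + -1*x1)^2" by simp
  have s2: "0 \<le> 1*(2*x4 + -2*x5 + -1*x1)^2" by simp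
  have s3: "0 \<le> 1*(2*x5 + -2*x6 + -1*x1)^2" by simp
  have s4: "0 \<le> 1*(2*x6 + -2*x7 + -1*x1)^2" by simp
  have s5: "0 \<le> 1*(2*x7 + -1*x1)^2" by simp
  have "2*x1^2 \<le> 8" using id assms(1) s0 s1 s2 s3 s4 s5 by linarith
  then have h: "2*(x1*x1) \<le> 8" by (simp add: power2_eq_square)
  show ?thesis
  proof (rule ccontr)
    assume "\<not> x1 \<le> 2"
    then have "3 \<le> x1" by simp
    then have "3*3 \<le> x1*x1" using mult_mono[of "3::int" "x1" "3" "x1"] by simp
    then show False using h by linarith
  qed
qed

lemma bnd2:
  assumes "Q x1 x2 x3 x4 x5 x6 x7 = 2" "0 \<le> x2"
  shows "x2 \<le> 2"
proof -
  have id: "420 * Q x1 x2 x3 x4 x5 x6 x7 = 210*(2*x1 + -1*x3)^2 + 70*(3*x3 + -2*x4)^2 + 35*(4*x4 + -3*x5 + -3*x2)^2 + 21*(5*x5 + -4*x6 + -3*x2)^2 + 14*(6*x6 + -5*x7 + -3*x2)^2 + 10*(7*x7 + -3*x2)^2 + 120*(x2)^2"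
    unfolding Q_def by (simp add: power2_eq_square algebra_simps)
  have s0: "0 \<le> 210*(2*x1 + -1*x3)^2" by simp
  have s1: "0 \<le> 70*(3*x3 + -2*x4)^2" by simp
  have s2: "0 \<le> 35*(4*x4 + -3*x5 + -3*x2)^2" by simp
  have s3: "0 \<le> 21*(5*x5 + -4*x6 + -3*x2)^2" by simp
  have s4: "0 \<le> 14*(6*x6 + -5*x7 + -3*x2)^2" by simp
  have s5: "0 \<le> 10*(7*x7 + -3*x2)^2" by simp
  have "120*x2^2 \<le> 840" using id assms(1) s0 s1 s2 s3 s4 s5 by linarith
  then have h: "120*(x2*x2) \<le> 840" by (simp add: power2_eq_square)
  show ?thesis
  proof (rule ccontr)
    assume "\<not> x2 \<le> 2"
    then have "3 \<le> x2" by simp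
    then have "3*3 \<le> x2*x2" using mult_mono[of "3::int" "x2" "3" "x2"] by simp
    then show False using h by linarith
  qed
qed

lemma bnd3:
  assumes "Q x1 x2 x3 x4 x5 x6 x7 = 2" "0 \<le> x3"
  shows "x3 \<le> 3"
proof -
  have id: "60 * Q x1 x2 x3 x4 x5 x6 x7 = 30*(2*x1 + -1*x3)^2 + 30*(2*x2 + -1*x4)^2 + 10*(3*x4 + -2*x5 + -2*x3)^2 + 5*(4*x5 + -3*x6 + -2*x3)^2 + 3*(5*x6 + -4*x7 + -2*x3)^2 + 8*(3*x7 + -1*x3)^2 + 10*(x3)^2"
    unfolding Q_def by (simp add: power2_eq_square algebra_simps)
  have s0: "0 \<le> 30*(2*x1 + -1*x3)^2" by simp
  have s1: "0 \<le> 30*(2*x2 + -1*x4)^2" by simp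
  have s2: "0 \<le> 10*(3*x4 + -2*x5 + -2*x3)^2" by simp
  have s3: "0 \<le> 5*(4*x5 + -3*x6 + -2*x3)^2" by simp
  have s4: "0 \<le> 3*(5*x6 + -4*x7 + -2*x3)^2" by simp
  have s5: "0 \<le> 8*(3*x7 + -1*x3)^2" by simp
  have "10*x3^2 \<le> 120" using id assms(1) s0 s1 s2 s3 s4 s5 by linarith
  then have h: "10*(x3*x3) \<le> 120" by (simp add: power2_eq_square)
  show ?thesis
  proof (rule ccontr)
    assume "\<not> x3 \<le> 3"
    then have "4 \<le> x3" by simp
    then have "4*4 \<le> x3*x3" using mult_mono[of "4::int" "x3" "4" "x3"] by simp
    then show False using h by linarith
  qed
qed

lemma bnd4:
  assumes "Q x1 x2 x3 x4 x5 x6 x7 = 2" "0 \<le> x4"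
  shows "x4 \<le> 4"
proof -
  have id: "12 * Q x1 x2 x3 x4 x5 x6 x7 = 6*(2*x1 + -1*x3)^2 + 6*(2*x2 + -1*x4)^2 + 2*(3*x3 + -2*x4)^2 + 6*(2*x5 + -1*x6 + -1*x4)^2 + 2*(3*x6 + -2*x7 + -1*x4)^2 + 1*(4*x7 + -1*x4)^2 + 1*(x4)^2"
    unfolding Q_def by (simp add: power2_eq_square algebra_simps)
  have s0: "0 \<le> 6*(2*x1 + -1*x3)^2" by simp
  have s1: "0 \<le> 6*(2*x2 + -1*x4)^2" by simp
  have s2: "0 \<le> 2*(3*x3 + -2*x4)^2" by simp
  have s3: "0 \<le> 6*(2*x5 + -1*x6 + -1*x4)^2" by simp
  have s4: "0 \<le> 2*(3*x6 + -2*x7 + -1*x4)^2" by simp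
  have s5: "0 \<le> 1*(4*x7 + -1*x4)^2" by simp
  have "1*x4^2 \<le> 24" using id assms(1) s0 s1 s2 s3 s4 s5 by linarith
  then have h: "1*(x4*x4) \<le> 24" by (simp add: power2_eq_square)
  show ?thesis
  proof (rule ccontr)
    assume "\<not> x4 \<le> 4"
    then have "5 \<le> x4" by simp
    then have "5*5 \<le> x4*x4" using mult_mono[of "5::int" "x4" "5" "x4"] by simp
    then show False using h by linarith
  qed
qed

lemma bnd5:
  assumes "Q x1 x2 x3 x4 x5 x6 x7 = 2" "0 \<le> x5"
  shows "x5 \<le> 3"
proof -
  have id: "30 * Q x1 x2 x3 x4 x5 x6 x7 = 15*(2*x1 + -1*x3)^2 + 15*(2*x2 + -1*x4)^2 + 5*(3*x3 + -2*x4)^2 + 1*(5*x4 + -6*x5)^2 + 15*(2*x6 + -1*x7 + -1*x5)^2 + 5*(3*x7 + -1*x5)^2 + 4*(x5)^2"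
    unfolding Q_def by (simp add: power2_eq_square algebra_simps)
  have s0: "0 \<le> 15*(2*x1 + -1*x3)^2" by simp
  have s1: "0 \<le> 15*(2*x2 + -1*x4)^2" by simp
  have s2: "0 \<le> 5*(3*x3 + -2*x4)^2" by simp
  have s3: "0 \<le> 1*(5*x4 + -6*x5)^2" by simp
  have s4: "0 \<le> 15*(2*x6 + -1*x7 + -1*x5)^2" by simp
  have s5: "0 \<le> 5*(3*x7 + -1*x5)^2" by simp
  have "4*x5^2 \<le> 60" using id assms(1) s0 s1 s2 s3 s4 s5 by linarith
  then have h: "4*(x5*x5) \<le> 60" by (simp add: power2_eq_square)
  show ?thesis
  proof (rule ccontr)
    assume "\<not> x5 \<le> 3"
    then have "4 \<le> x5" by simp
    then have "4*4 \<le> x5*x5" using mult_mono[of "4::int" "x5" "4" "x5"] by simp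
    then show False using h by linarith
  qed
qed

lemma bnd6:
  assumes "Q x1 x2 x3 x4 x5 x6 x7 = 2" "0 \<le> x6"
  shows "x6 \<le> 2"
proof -
  have id: "60 * Q x1 x2 x3 x4 x5 x6 x7 = 30*(2*x1 + -1*x3)^2 + 30*(2*x2 + -1*x4)^2 + 10*(3*x3 + -2*x4)^2 + 2*(5*x4 + -6*x5)^2 + 3*(4*x5 + -5*x6)^2 + 30*(2*x7 + -1*x6)^2 + 15*(x6)^2"
    unfolding Q_def by (simp add: power2_eq_square algebra_simps)
  have s0: "0 \<le> 30*(2*x1 + -1*x3)^2" by simp
  have s1: "0 \<le> 30*(2*x2 + -1*x4)^2" by simp
  have s2: "0 \<le> 10*(3*x3 + -2*x4)^2" by simp
  have s3: "0 \<le> 2*(5*x4 + -6*x5)^2" by simp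
  have s4: "0 \<le> 3*(4*x5 + -5*x6)^2" by simp
  have s5: "0 \<le> 30*(2*x7 + -1*x6)^2" by simp
  have "15*x6^2 \<le> 120" using id assms(1) s0 s1 s2 s3 s4 s5 by linarith
  then have h: "15*(x6*x6) \<le> 120" by (simp add: power2_eq_square)
  show ?thesis
  proof (rule ccontr)
    assume "\<not> x6 \<le> 2"
    then have "3 \<le> x6" by simp
    then have "3*3 \<le> x6*x6" using mult_mono[of "3::int" "x6" "3" "x6"] by simp
    then show False using h by linarith
  qed
qed

lemma bnd7:
  assumes "Q x1 x2 x3 x4 x5 x6 x7 = 2" "0 \<le> x7"
  shows "x7 \<le> 1"
proof -
  have id: "60 * Q x1 x2 x3 x4 x5 x6 x7 = 30*(2*x1 + -1*x3)^2 + 30*(2*x2 + -1*x4)^2 + 10*(3*x3 + -2*x4)^2 + 2*(5*x4 + -6*x5)^2 + 3*(4*x5 + -5*x6)^2 + 5*(3*x6 + -4*x7)^2 + 40*(x7)^2"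
    unfolding Q_def by (simp add: power2_eq_square algebra_simps)
  have s0: "0 \<le> 30*(2*x1 + -1*x3)^2" by simp
  have s1: "0 \<le> 30*(2*x2 + -1*x4)^2" by simp
  have s2: "0 \<le> 10*(3*x3 + -2*x4)^2" by simp
  have s3: "0 \<le> 2*(5*x4 + -6*x5)^2" by simp
  have s4: "0 \<le> 3*(4*x5 + -5*x6)^2" by simp
  have s5: "0 \<le> 5*(3*x6 + -4*x7)^2" by simp
  have "40*x7^2 \<le> 120" using id assms(1) s0 s1 s2 s3 s4 s5 by linarith
  then have h: "40*(x7*x7) \<le> 120" by (simp add: power2_eq_square)
  show ?thesis
  proof (rule ccontr)
    assume "\<not> x7 \<le> 1"
    then have "2 \<le> x7" by simp
    then have "2*2 \<le> x7*x7" using mult_mono[of "2::int" "x7" "2" "x7"] by simp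
    then show False using h by linarith
  qed
qed

definition T :: "int list list" where "T = [[0,0,0,0,0,0,1], [0,0,0,0,0,1,1], [0,0,0,0,1,1,1], [0,0,0,1,1,1,1], [0,0,1,1,1,1,1], [0,1,0,1,1,1,1], [0,1,1,1,1,1,1], [0,1,1,2,1,1,1], [0,1,1,2,2,1,1], [0,1,1,2,2,2,1], [1,0,1,1,1,1,1], [1,1,1,1,1,1,1], [1,1,1,2,1,1,1], [1,1,1,2,2,1,1], [1,1,1,2,2,2,1], [1,1,2,2,1,1,1], [1,1,2,2,2,1,1], [1,1,2,2,2,2,1], [1,1,2,3,2,1,1], [1,1,2,3,2,2,1], [1,1,2,3,3,2,1], [1,2,2,3,2,1,1], [1,2,2,3,2,2,1], [1,2,2,3,3,2,1], [1,2,2,4,3,2,1], [1,2,3,4,3,2,1], [2,2,3,4,3,2,1]]"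
lemma enum_all: "\<forall>x1\<in>{0,1,2}. \<forall>x2\<in>{0,1,2}. \<forall>x3\<in>{0,1,2,3}. \<forall>x4\<in>{0,1,2,3,4}. \<forall>x5\<in>{0,1,2,3}. \<forall>x6\<in>{0,1,2}. \<forall>x7\<in>{1}. Q x1 x2 x3 x4 x5 x6 x7 = 2 \<longrightarrow> [x1,x2,x3,x4,x5,x6,x7] \<in> set T"
  by (simp add: Q_def T_def)
lemma gram_tab: "gram i j = (if i = j then 2 else if (i,j) \<in> {(1,3),(3,1),(3,4),(4,3),(4,5),(5,4),(5,6),(6,5),(6,7),(7,6),(2,4),(4,2)} then -1 else 0)"
  unfolding gram_def E7edge_def by (auto simp: doubleton_eq_iff)
lemma form_Q: "form b b = Q (b 1) (b 2) (b 3) (b 4) (b 5) (b 6) (b 7)"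
proof -
  have s: "{1..7::nat} = {1,2,3,4,5,6,7}" by auto
  show ?thesis unfolding form_def s gram_tab Q_def
    by (simp add: power2_eq_square algebra_simps)
qed

definition mk :: "int list \<Rightarrow> nat \<Rightarrow> int" where
  "mk xs i = (if 1 \<le> i \<and> i \<le> 7 then xs ! (i - 1) else 0)"

lemma lattice_mk: "b \<in> lattice \<Longrightarrow> b = mk [b 1, b 2, b 3, b 4, b 5, b 6, b 7]"
proof
  fix i assume "b \<in> lattice"
  then show "b i = mk [b 1, b 2, b 3, b 4, b 5, b 6, b 7] i"
    unfolding lattice_def mk_def
    by (cases "i = 1 \<or> i = 2 \<or> i = 3 \<or> i = 4 \<or> i = 5 \<or> i = 6 \<or> i = 7") auto
qed

lemma Delta_sub: "b \<in> Delta7pos \<Longrightarrow> [b 1, b 2, b 3, b 4, b 5, b 6, b 7] \<in> set T"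
proof -
  assume a: "b \<in> Delta7pos"
  have q: "Q (b 1) (b 2) (b 3) (b 4) (b 5) (b 6) (b 7) = 2" and nn: "\<And>i. 0 \<le> b i" and n7: "b 7 \<noteq> 0"
    using a form_Q[of b] unfolding Delta7pos_def E7pos_def E7roots_def by auto

  have h1: "b 1 \<in> {0,1,2}" using bnd1[OF q nn] nn[of 1] by auto
  moreover have h2: "b 2 \<in> {0,1,2}" using bnd2[OF q nn] nn[of 2] by auto
  moreover have h3: "b 3 \<in> {0,1,2,3}" using bnd3[OF q nn] nn[of 3] by auto
  moreover have h4: "b 4 \<in> {0,1,2,3,4}" using bnd4[OF q nn] nn[of 4] by auto
  moreover have h5: "b 5 \<in> {0,1,2,3}" using bnd5[OF q nn] nn[of 5] by auto
  moreover have h6: "b 6 \<in> {0,1,2}" using bnd6[OF q nn] nn[of 6] by auto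
  moreover have h7: "b 7 \<in> {1}" using bnd7[OF q nn] nn[of 7] n7 by auto
  show ?thesis by (rule enum_all[rule_format, OF h1 h2 h3 h4 h5 h6 h7 q])
qed

lemma mk_lat: "mk xs \<in> lattice"
  unfolding mk_def lattice_def by auto

lemma mk_nn: "\<forall>x\<in>set xs. 0 \<le> x \<Longrightarrow> length xs = 7 \<Longrightarrow> 0 \<le> mk xs i"
  unfolding mk_def by (auto intro: nth_mem)

lemma mk_at: "1 \<le> k \<Longrightarrow> k \<le> 7 \<Longrightarrow> mk xs k = xs ! (k - 1)"
  unfolding mk_def by auto

lemma T_prop: "\<forall>xs\<in>set T. (\<forall>x\<in>set xs. 0 \<le> x) \<and> length xs = 7 \<and>
   Q (xs!0) (xs!1) (xs!2) (xs!3) (xs!4) (xs!5) (xs!6) = 2 \<and> xs!6 \<noteq> 0"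
  by (simp add: T_def Q_def)

lemma T_sub: "xs \<in> set T \<Longrightarrow> mk xs \<in> Delta7pos"
proof -
  assume a: "xs \<in> set T"
  have "form (mk xs) (mk xs) = 2" using T_prop a by (simp add: form_Q mk_at)
  moreover have "\<forall>i. 0 \<le> mk xs i" using T_prop a mk_nn by blast
  moreover have "mk xs 7 \<noteq> 0" using T_prop a by (simp add: mk_at)
  ultimately show ?thesis unfolding Delta7pos_def E7pos_def E7roots_def using mk_lat by auto
qed

lemma Delta_eq: "Delta7pos = mk ` set T"
proof
  show "Delta7pos \<subseteq> mk ` set T"
  proof
    fix b assume a: "b \<in> Delta7pos"
    then have "b \<in> lattice" unfolding Delta7pos_def E7pos_def E7roots_def by auto
    then show "b \<in> mk ` set T" using lattice_mk Delta_sub[OF a] by blast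
  qed
  show "mk ` set T \<subseteq> Delta7pos" using T_sub by blast
qed

lemma fhom_mk: "fhom (mk [a1,a2,a3,a4,a5,a6,a7]) = foldr vadd [vscale a1 (1,0,0), vscale a2 (0,3,0), vscale a3 (3,0,0), vscale a4 (1,1,1), vscale a5 (0,0,3), vscale a6 (0,0,1), vscale a7 (0,3,3)] (0,0,0)"
  by (simp add: fhom_def mk_def upt_rec fsimple_def)

definition L :: "vecV list" where "L = [(0,3,3),(0,3,2),(0,3,1),(1,2,0),(2,2,0),(1,1,0),(2,1,0),(3,0,1),(3,0,2),(3,0,3),(3,2,0),(3,1,0),(2,0,1),(2,0,2),(2,0,3),(1,0,1),(1,0,2),(1,0,3),(0,1,3),(0,1,2),(0,1,1),(0,2,3),(0,2,2),(0,2,1),(1,3,0),(2,3,0),(3,3,0)]"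

lemma allc: "\<forall>a\<in>{0,1,2,3}. \<forall>b\<in>{0,1,2,3}. \<forall>c\<in>{0,1,2,3::nat}. ((a,b,c) \<in> set L \<longleftrightarrow>
            ((a = 0 \<and> b \<noteq> 0 \<and> c \<noteq> 0) \<or>
            (a \<noteq> 0 \<and> b = 0 \<and> c \<noteq> 0) \<or>
            (a \<noteq> 0 \<and> b \<noteq> 0 \<and> c = 0)))"
  by (simp add: L_def)
lemma setL: "set L \<subseteq> Vset" by (simp add: L_def Vset_def Fset_def)
lemma fin: "set L = {(a,b,c). (a,b,c) \<in> Vset \<and>
           ((a = 0 \<and> b \<noteq> 0 \<and> c \<noteq> 0) \<or>
            (a \<noteq> 0 \<and> b = 0 \<and> c \<noteq> 0) \<or>
            (a \<noteq> 0 \<and> b \<noteq> 0 \<and> c = 0))}" (is "_ = ?R")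
proof
  show "set L \<subseteq> ?R"
  proof
    fix x assume x: "x \<in> set L"
    obtain a b c where e: "x = (a,b,c)" by (cases x) auto
    have v: "(a,b,c) \<in> Vset" using x e setL by auto
    then have h1: "a \<in> {0,1,2,3}" and h2: "b \<in> {0,1,2,3}" and h3: "c \<in> {0,1,2,3}" unfolding Vset_def Fset_def by auto
    note q = allc[rule_format, OF h1 h2 h3]
    show "x \<in> ?R" using q x e v by simp
  qed
  show "?R \<subseteq> set L"
  proof
    fix x assume x: "x \<in> ?R"
    obtain a b c where e: "x = (a,b,c)" by (cases x) auto
    have v: "(a,b,c) \<in> Vset" using x e by auto
    then have h1: "a \<in> {0,1,2,3}" and h2: "b \<in> {0,1,2,3}" and h3: "c \<in> {0,1,2,3}" unfolding Vset_def Fset_def by auto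
    note q = allc[rule_format, OF h1 h2 h3]
    show "x \<in> set L" using q x e by simp
  qed
qed

lemma fhom_img: "fhom ` mk ` set T = set L"
proof -
  have "map (\<lambda>xs. fhom (mk xs)) T = L"
    by (simp add: T_def L_def fhom_mk vadd_def vscale_def)
  then show ?thesis by (metis image_image list.set_map)
qed

theorem mainTheorem6:
  shows "Gamma7pos = {(a,b,c). (a,b,c) \<in> Vset \<and>
           ((a = 0 \<and> b \<noteq> 0 \<and> c \<noteq> 0) \<or>
            (a \<noteq> 0 \<and> b = 0 \<and> c \<noteq> 0) \<or>
            (a \<noteq> 0 \<and> b \<noteq> 0 \<and> c = 0))}"
  unfolding Gamma7pos_def Delta_eq fhom_img fin by (rule refl)

end
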